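(* Let $G=(V,E)$ be a finite graph with maximum vertex degree $\Delta(G)$, and let $A$ be an abelian group. If $|A|>|V|+|E|\,\Delta(G)-1$, then $G$ is $A$-cordial.
   Context: Graphs are finite, simple and undirected. For an abelian group $A$ and a graph $G=(V,E)$, a vertex labeling $\ell:V\to A$ induces an edge labeling $\ell(\{v_1,v_2\})=\ell(v_1)+\ell(v_2)$. Let $f_V(a)=|\{v\in V:\ell(v)=a\}|$ and $f_E(a)=|\{e\in E:\ell(e)=a\}|$. The labeling is $A$-cordial if $|f_V(a_1)-f_V(a_2)|\le 1$ and $|f_E(a_1)-f_E(a_2)|\le 1$ for all $a_1,a_2\in A$; $G$ is $A$-cordial if it admits an $A$-cordial labeling. *)

theory Defs
  imports Main
begin

definition simple_graph :: "'v set \<Rightarrow> 'v set set \<Rightarrow> bool" where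
  "simple_graph V E \<longleftrightarrow> finite V \<and> (\<forall>e\<in>E. e \<subseteq> V \<and> card e = 2)"

definition degree :: "'v set set \<Rightarrow> 'v \<Rightarrow> nat" where
  "degree E v = card {e\<in>E. v \<in> e}"

definition max_degree :: "'v set \<Rightarrow> 'v set set \<Rightarrow> nat" where
  "max_degree V E = (if V = {} then 0 else Max (degree E ` V))"

definition edge_label :: "('v \<Rightarrow> 'a::ab_group_add) \<Rightarrow> 'v set \<Rightarrow> 'a" where
  "edge_label l e = (\<Sum>v\<in>e. l v)"

definition f_V :: "'v set \<Rightarrow> ('v \<Rightarrow> 'a::ab_group_add) \<Rightarrow> 'a \<Rightarrow> nat" where
  "f_V V l a = card {v\<in>V. l v = a}"

definition f_E :: "'v set set \<Rightarrow> ('v \<Rightarrow> 'a::ab_group_add) \<Rightarrow> 'a \<Rightarrow> nat" where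
  "f_E E l a = card {e\<in>E. edge_label l e = a}"

definition cordial_labeling :: "'v set \<Rightarrow> 'v set set \<Rightarrow> ('v \<Rightarrow> 'a::ab_group_add) \<Rightarrow> bool" where
  "cordial_labeling V E l \<longleftrightarrow>
     (\<forall>a1 a2. \<bar>int (f_V V l a1) - int (f_V V l a2)\<bar> \<le> 1 \<and>
              \<bar>int (f_E E l a1) - int (f_E E l a2)\<bar> \<le> 1)"

text \<open>G = (V,E) is A-cordial, where A is the (finite) abelian group given by the type 'a.\<close>
definition A_cordial :: "'a::ab_group_add itself \<Rightarrow> 'v set \<Rightarrow> 'v set set \<Rightarrow> bool" where
  "A_cordial _ V E \<longleftrightarrow> (\<exists>l :: 'v \<Rightarrow> 'a. cordial_labeling V E l)"

end

theory Submission
  imports Defs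
begin

lemma main_step:
  fixes V :: "'v set" and E :: "'v set set"
  assumes fin: "finite S" and sub: "S \<subseteq> V" and G: "simple_graph V E"
    and big: "card V + card E * max_degree V E \<le> card (UNIV :: ('a::{ab_group_add,finite}) set)"
  shows "\<exists>l::'v \<Rightarrow> 'a. inj_on l S \<and> inj_on (edge_label l) {e\<in>E. e \<subseteq> S}"
  using fin sub
proof (induction S rule: finite_induct)
  case empty
  have "{e\<in>E. e \<subseteq> {}} \<subseteq> {{}}" by auto
  then show ?case by (auto simp: inj_on_def)
next
  case (insert x F)
  from insert obtain l :: "'v \<Rightarrow> 'a" where linj: "inj_on l F"
    and einj: "inj_on (edge_label l) {e\<in>E. e \<subseteq> F}" by auto
  have finV: "finite V" using G by (simp add: simple_graph_def)
  have EV: "\<And>e. e \<in> E \<Longrightarrow> e \<subseteq> V \<and> card e = 2" using G by (simp add: simple_graph_def)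
  have finE: "finite E"
  proof -
    have "E \<subseteq> Pow V" using EV by auto
    then show ?thesis by (rule finite_subset) (simp add: finV)
  qed
  have xV: "x \<in> V" using insert by auto
  define EF where "EF = {e\<in>E. e \<subseteq> F}"
  define N where "N = {u\<in>F. {x,u} \<in> E}"
  define C where "C = (\<lambda>(u,c). c - l u) ` (N \<times> edge_label l ` EF)"
  define B where "B = l ` F \<union> C"
  have finF: "finite F" by fact
  have finN: "finite N" unfolding N_def using finF by auto
  have finEF: "finite EF" unfolding EF_def using finE by auto
  have "card N \<le> degree E x"
  proof -
    have "inj_on (\<lambda>u. {x,u}) N" unfolding N_def inj_on_def using insert.hyps(2)
      by (auto simp: doubleton_eq_iff)
    moreover have "(\<lambda>u. {x,u}) ` N \<subseteq> {e\<in>E. x \<in> e}" unfolding N_def by auto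
    moreover have "finite {e\<in>E. x \<in> e}" using finE by auto
    ultimately show ?thesis unfolding degree_def by (rule card_inj_on_le)
  qed
  also have "degree E x \<le> max_degree V E"
    using xV finV unfolding max_degree_def by auto
  finally have cN: "card N \<le> max_degree V E" .
  have cEF: "card EF \<le> card E" unfolding EF_def using finE by (intro card_mono) auto
  have "card C \<le> card (N \<times> edge_label l ` EF)" unfolding C_def by (rule card_image_le) (use finN finEF in auto)
  also have "\<dots> = card N * card (edge_label l ` EF)" by (rule card_cartesian_product)
  also have "\<dots> \<le> card N * card EF" using card_image_le[OF finEF] by auto
  also have "\<dots> \<le> max_degree V E * card E" using cN cEF by (intro mult_mono) auto
  finally have cC: "card C \<le> card E * max_degree V E" by (simp add: mult.commute)
  have cF: "card F < card V"
    using insert finV by (intro psubset_card_mono) auto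
  have finC: "finite C" unfolding C_def using finN finEF by auto
  have "card B \<le> card (l ` F) + card C" unfolding B_def by (rule card_Un_le)
  also have "\<dots> \<le> card F + card C" using card_image_le[OF finF] by auto
  finally have "card B < card (UNIV :: 'a set)" using cC cF big by linarith
  then have "B \<noteq> UNIV" by auto
  then obtain a where aB: "a \<notin> B" by blast
  define l' where "l' = l(x := a)"
  have l'F: "\<And>u. u \<in> F \<Longrightarrow> l' u = l u" unfolding l'_def using insert.hyps(2) by auto
  have elF: "\<And>e. e \<subseteq> F \<Longrightarrow> edge_label l' e = edge_label l e"
    unfolding edge_label_def using l'F by (intro sum.cong) auto
  have elx: "\<And>u. u \<in> F \<Longrightarrow> edge_label l' {x,u} = a + l u"
  proof -
    fix u assume u: "u \<in> F"
    then have ux: "u \<noteq> x" using insert.hyps(2) by auto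
    then have "edge_label l' {x,u} = l' x + l' u" unfolding edge_label_def by simp
    then show "edge_label l' {x,u} = a + l u" using l'F[OF u] by (simp add: l'_def)
  qed
  have inj1: "inj_on l' (insert x F)"
  proof -
    have "inj_on l' F" using linj l'F by (metis inj_on_cong)
    moreover have "l' x \<notin> l' ` (F - {x})" using aB l'F unfolding B_def l'_def by auto
    ultimately show ?thesis by simp
  qed
  have shape: "\<And>e. e \<in> E \<Longrightarrow> e \<subseteq> insert x F \<Longrightarrow> e \<subseteq> F \<or> (\<exists>u\<in>N. e = {x,u})"
  proof -
    fix e assume eE: "e \<in> E" and es: "e \<subseteq> insert x F"
    show "e \<subseteq> F \<or> (\<exists>u\<in>N. e = {x,u})"
    proof (cases "x \<in> e")
      case False then show ?thesis using es by auto
    next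
      case True
      have "card e = 2" using EV eE by auto
      then obtain p q where pq: "e = {p,q}" "p \<noteq> q" by (meson card_2_iff)
      then obtain u where eu: "e = {x,u}" "u \<noteq> x" using True by auto
      then have "u \<in> F" using es by auto
      then show ?thesis using eE eu unfolding N_def by auto
    qed
  qed
  have inj2: "inj_on (edge_label l') {e\<in>E. e \<subseteq> insert x F}"
  proof (rule inj_onI)
    fix e1 e2 assume e1: "e1 \<in> {e\<in>E. e \<subseteq> insert x F}" and e2: "e2 \<in> {e\<in>E. e \<subseteq> insert x F}"
      and eq: "edge_label l' e1 = edge_label l' e2"
    have cross: False if "e \<in> EF" "u \<in> N" "edge_label l' {x,u} = edge_label l' e" for e u
    proof -
      have "u \<in> F" using that N_def by auto
      then have "a + l u = edge_label l e" using that elx elF EF_def by auto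
      then have "a = edge_label l e - l u" by (simp add: algebra_simps)
      then have "a \<in> C" unfolding C_def using that by force
      then show False using aB B_def by auto
    qed
    have d1: "e1 \<subseteq> F \<or> (\<exists>u\<in>N. e1 = {x,u})" using shape e1 by auto
    have d2: "e2 \<subseteq> F \<or> (\<exists>u\<in>N. e2 = {x,u})" using shape e2 by auto
    from d1 d2 show "e1 = e2"
    proof (elim disjE)
      assume "e1 \<subseteq> F" "e2 \<subseteq> F"
      then show ?thesis using eq elF einj e1 e2 unfolding inj_on_def by auto
    next
      assume "e1 \<subseteq> F" "\<exists>u\<in>N. e2 = {x,u}"
      then obtain u where "u \<in> N" "e2 = {x,u}" by blast
      moreover have "e1 \<in> EF" using \<open>e1 \<subseteq> F\<close> e1 unfolding EF_def by auto
      ultimately have False using cross[of e1 u] eq by simp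
      then show ?thesis ..
    next
      assume "\<exists>u\<in>N. e1 = {x,u}" "e2 \<subseteq> F"
      then obtain u where "u \<in> N" "e1 = {x,u}" by blast
      moreover have "e2 \<in> EF" using \<open>e2 \<subseteq> F\<close> e2 unfolding EF_def by auto
      ultimately have False using cross[of e2 u] eq by simp
      then show ?thesis ..
    next
      assume "\<exists>u\<in>N. e1 = {x,u}" "\<exists>u\<in>N. e2 = {x,u}"
      then obtain u1 u2 where u: "u1 \<in> N" "u2 \<in> N" "e1 = {x,u1}" "e2 = {x,u2}" by auto
      then have "u1 \<in> F" "u2 \<in> F" unfolding N_def by auto
      then have "l u1 = l u2" using eq u elx by auto
      then show ?thesis using linj \<open>u1 \<in> F\<close> \<open>u2 \<in> F\<close> u unfolding inj_on_def by auto
    qed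
  qed
  show ?case using inj1 inj2 by blast
qed

lemma card_le1: "finite A \<Longrightarrow> inj_on f A \<Longrightarrow> card {v\<in>A. f v = a} \<le> 1"
  by (subst One_nat_def, subst card_le_Suc0_iff_eq) (auto simp: inj_on_def)

theorem theorem3p2:
  fixes V :: "'v set" and E :: "'v set set"
  assumes "simple_graph V E"
    and "int (card (UNIV :: ('a::{ab_group_add,finite}) set)) > int (card V) + int (card E) * int (max_degree V E) - 1"
  shows "A_cordial TYPE('a) V E"
proof -
  have big: "card V + card E * max_degree V E \<le> card (UNIV :: 'a set)" proof -
    have "int (card V + card E * max_degree V E) \<le> int (card (UNIV :: 'a set))" using assms(2) by simp
    then show ?thesis by linarith
  qed
  have finV: "finite V" using assms(1) by (simp add: simple_graph_def)
  have finE: "finite E"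
  proof -
    have "E \<subseteq> Pow V" using assms(1) by (auto simp: simple_graph_def)
    then show ?thesis by (rule finite_subset) (simp add: finV)
  qed
  obtain l :: "'v \<Rightarrow> 'a" where l: "inj_on l V" "inj_on (edge_label l) {e\<in>E. e \<subseteq> V}"
    using main_step[OF finV subset_refl assms(1) big] by blast
  have "{e\<in>E. e \<subseteq> V} = E" using assms(1) by (auto simp: simple_graph_def)
  with l have l2: "inj_on (edge_label l) E" by simp
  have fV: "\<And>a. int (f_V V l a) \<le> 1" unfolding f_V_def using card_le1[OF finV l(1)] by simp
  have fE: "\<And>a. int (f_E E l a) \<le> 1" unfolding f_E_def using card_le1[OF finE l2] by simp
  have "cordial_labeling V E l" unfolding cordial_labeling_def
  proof (intro allI conjI)
    fix a1 a2
    show "\<bar>int (f_V V l a1) - int (f_V V l a2)\<bar> \<le> 1" using fV[of a1] fV[of a2] by linarith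
    show "\<bar>int (f_E E l a1) - int (f_E E l a2)\<bar> \<le> 1" using fE[of a1] fE[of a2] by linarith
  qed
  then show ?thesis unfolding A_cordial_def by blast
qed

end
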